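(* Consider the APT–DIFT game described in the context and suppose the information flow graph $\mathcal G$ is acyclic, with $N$ nodes. Then, under any strategy pair $(p_A,p_D)$, the state space of the APT–DIFT game is acyclic (the directed graph on $\mathbf S$ having an edge $s\to s'$ whenever $P(s,a,d,s')>0$ for some $a\in\mathcal A_A(s)$, $d\in\mathcal A_D(s)$ has no directed cycle), and the game terminates in at most $N+4$ steps, i.e. $T\le N+4$.
   Context: Let $\mathcal G=(V_{\mathcal G},E_{\mathcal G})$ be a finite directed graph (the information flow graph) with $V_{\mathcal G}=\{v_1,\dots,v_N\}$, let $\lambda\subset V_{\mathcal G}$ be a set of entry points and $\mathcal D=\{v_1,\dots,v_q\}\subset V_{\mathcal G}$ a destination set, $FN,FP:V_{\mathcal G}\to(0,1)$ and $\beta>0$. The APT–DIFT game is a two-player stochastic game with state space $\mathbf S=\{v_0,v_1,\dots,v_N,\phi,\tau_A,\tau_B\}$ and initial state $v_0$; the states in $\{\phi,\tau_A,\tau_B\}\cup\mathcal D$ are absorbing with empty action sets, and the game terminates (at time $T$) when an absorbing state is reached. At $v_0$: $\mathcal A_A(v_0)=\lambda$, $\mathcal A_D(v_0)=\{0\}$. At a non-absorbing $s=v_i\in V_{\mathcal G}$: $\mathcal A_A(s)=\{\phi\}\cup\{v_j:(v_i,v_j)\in E_{\mathcal G}\}$, $\mathcal A_D(s)=\{0\}\cup\{v_j:(v_i,v_j)\in E_{\mathcal G}\}$. Transition probabilities $P(s,a,d,s')$: if $d=0$, $s'=a$ with probability $1$; if $d=a$, $s'=a$ with probability $FN(d)$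 and $s'=\tau_A$ with probability $1-FN(d)$; if $d\ne0$ and $d\neq a$, $s'=\tau_B$ with probability $FP(d)$ and $s'=a$ with probability $1-FP(d)$. Strategies are stationary mixed strategies assigning to each non-absorbing state a distribution over the player's actions there. *)

theory Defs
  imports "HOL-Probability.Probability_Mass_Function"
begin

datatype 'v gstate = V0 | Node 'v | Phi | TauA | TauB

definition state_space :: "'v set \<Rightarrow> 'v gstate set" where
  "state_space V = {V0, Phi, TauA, TauB} \<union> Node ` V"

definition absorbing :: "'v set \<Rightarrow> 'v gstate \<Rightarrow> bool" where
  "absorbing D s \<longleftrightarrow> s \<in> {Phi, TauA, TauB} \<union> Node ` D"

text \<open>Attacker action sets (actions are target states: phi or a successor node).\<close>
definition act_A :: "('v \<times> 'v) set \<Rightarrow> 'v set \<Rightarrow> 'v set \<Rightarrow> 'v gstate \<Rightarrow> 'v gstate set" where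
  "act_A E lam D s = (if absorbing D s then {} else
     (case s of V0 \<Rightarrow> Node ` lam
              | Node v \<Rightarrow> insert Phi {Node w | w. (v, w) \<in> E}
              | _ \<Rightarrow> {}))"

text \<open>Defender action sets: None encodes the action 0, Some w encodes tagging node w.\<close>
definition act_D :: "('v \<times> 'v) set \<Rightarrow> 'v set \<Rightarrow> 'v gstate \<Rightarrow> 'v option set" where
  "act_D E D s = (if absorbing D s then {} else
     (case s of V0 \<Rightarrow> {None}
              | Node v \<Rightarrow> insert None {Some w | w. (v, w) \<in> E}
              | _ \<Rightarrow> {}))"

definition trans_prob :: "('v \<Rightarrow> real) \<Rightarrow> ('v \<Rightarrow> real) \<Rightarrow>
    'v gstate \<Rightarrow> 'v gstate \<Rightarrow> 'v option \<Rightarrow> 'v gstate \<Rightarrow> real" where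
  "trans_prob FN FP s a d s' = (case d of
      None \<Rightarrow> (if s' = a then 1 else 0)
    | Some dv \<Rightarrow>
        (if Node dv = a then
           (if s' = a then FN dv else 0) + (if s' = TauA then 1 - FN dv else 0)
         else
           (if s' = TauB then FP dv else 0) + (if s' = a then 1 - FP dv else 0)))"

definition state_graph :: "'v set \<Rightarrow> ('v \<times> 'v) set \<Rightarrow> 'v set \<Rightarrow> 'v set \<Rightarrow>
    ('v \<Rightarrow> real) \<Rightarrow> ('v \<Rightarrow> real) \<Rightarrow> ('v gstate \<times> 'v gstate) set" where
  "state_graph V E lam D FN FP =
     {(s, s'). s \<in> state_space V \<and> s' \<in> state_space V \<and>
        (\<exists>a \<in> act_A E lam D s. \<exists>d \<in> act_D E D s. trans_prob FN FP s a d s' > 0)}"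

definition valid_strategies :: "'v set \<Rightarrow> ('v \<times> 'v) set \<Rightarrow> 'v set \<Rightarrow> 'v set \<Rightarrow>
    ('v gstate \<Rightarrow> 'v gstate pmf) \<Rightarrow> ('v gstate \<Rightarrow> 'v option pmf) \<Rightarrow> bool" where
  "valid_strategies V E lam D pA pD \<longleftrightarrow>
     (\<forall>s \<in> state_space V. \<not> absorbing D s \<longrightarrow>
        set_pmf (pA s) \<subseteq> act_A E lam D s \<and> set_pmf (pD s) \<subseteq> act_D E D s)"

definition is_play :: "'v set \<Rightarrow> ('v \<Rightarrow> real) \<Rightarrow> ('v \<Rightarrow> real) \<Rightarrow>
    ('v gstate \<Rightarrow> 'v gstate pmf) \<Rightarrow> ('v gstate \<Rightarrow> 'v option pmf) \<Rightarrow> (nat \<Rightarrow> 'v gstate) \<Rightarrow> bool" where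
  "is_play D FN FP pA pD traj \<longleftrightarrow> traj 0 = V0 \<and>
     (\<forall>k. (\<not> absorbing D (traj k) \<longrightarrow>
            (\<exists>a \<in> set_pmf (pA (traj k)). \<exists>d \<in> set_pmf (pD (traj k)).
               trans_prob FN FP (traj k) a d (traj (Suc k)) > 0)) \<and>
          (absorbing D (traj k) \<longrightarrow> traj (Suc k) = traj k))"

definition term_time :: "'v set \<Rightarrow> (nat \<Rightarrow> 'v gstate) \<Rightarrow> nat" where
  "term_time D traj = (LEAST k. absorbing D (traj k))"

end

theory Submission
  imports Defs
begin

lemma tp_pos:
  assumes "trans_prob FN FP s a d t > 0"
  shows "t = a \<or> t = TauA \<or> t = TauB"
  using assms unfolding trans_prob_def
  by (auto split: option.splits if_splits)

lemma actA_space: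
  assumes "lam \<subseteq> V" "E \<subseteq> V \<times> V" "a \<in> act_A E lam D s"
  shows "a \<in> state_space V"
  using assms unfolding act_A_def state_space_def
  by (auto split: gstate.splits if_splits)

lemma edge_cases:
  assumes "(s, t) \<in> state_graph V E lam D FN FP"
  shows "(s = V0 \<and> t \<noteq> V0) \<or> (\<exists>v. s = Node v \<and> (t \<in> {Phi, TauA, TauB} \<or> (\<exists>w. t = Node w \<and> (v, w) \<in> E)))"
proof -
  from assms obtain a d where a: "a \<in> act_A E lam D s" and d: "d \<in> act_D E D s"
    and p: "trans_prob FN FP s a d t > 0"
    unfolding state_graph_def by auto
  have t: "t = a \<or> t = TauA \<or> t = TauB" using tp_pos[OF p] .
  show ?thesis
  proof (cases s)
    case V0
    then have "d = None" using d by (auto simp: act_D_def absorbing_def split: if_splits)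
    then have "t = a" using p by (auto simp: trans_prob_def split: if_splits)
    then show ?thesis using V0 a by (auto simp: act_A_def absorbing_def split: if_splits)
  next
    case (Node v)
    then show ?thesis using a t by (auto simp: act_A_def split: if_splits)
  qed (use a in \<open>auto simp: act_A_def absorbing_def\<close>)
qed

lemma trancl_cases:
  assumes "(s, t) \<in> (state_graph V E lam D FN FP)\<^sup>+"
  shows "(s = V0 \<and> t \<noteq> V0) \<or> (\<exists>v. s = Node v \<and> (t \<in> {Phi, TauA, TauB} \<or> (\<exists>w. t = Node w \<and> (v, w) \<in> E\<^sup>+)))"
  using assms
proof (induction rule: trancl_induct)
  case (base y)
  then show ?case using edge_cases[OF base] by auto
next
  case (step y z)
  from edge_cases[OF step(2)] have e: "(y = V0 \<and> z \<noteq> V0) \<or> (\<exists>v. y = Node v \<and> (z \<in> {Phi, TauA, TauB} \<or> (\<exists>w. z = Node w \<and> (v, w) \<in> E)))" .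
  from step(3) show ?case
  proof
    assume "s = V0 \<and> y \<noteq> V0"
    then show ?case using e by auto
  next
    assume "\<exists>v. s = Node v \<and> (y \<in> {Phi, TauA, TauB} \<or> (\<exists>w. y = Node w \<and> (v, w) \<in> E\<^sup>+))"
    then obtain v where sv: "s = Node v" and y: "y \<in> {Phi, TauA, TauB} \<or> (\<exists>w. y = Node w \<and> (v, w) \<in> E\<^sup>+)" by blast
    show ?case using y e sv by (auto intro: trancl_into_trancl)
  qed
qed

lemma graph_acyclic:
  assumes "acyclic E"
  shows "acyclic (state_graph V E lam D FN FP)"
  unfolding acyclic_def
proof
  fix x
  show "(x, x) \<notin> (state_graph V E lam D FN FP)\<^sup>+"
  proof
    assume "(x, x) \<in> (state_graph V E lam D FN FP)\<^sup>+"
    from trancl_cases[OF this] assms show False by (auto simp: acyclic_def)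
  qed
qed

theorem theorem4:
  fixes V :: "'v set" and E :: "('v \<times> 'v) set" and lam D :: "'v set"
    and FN FP :: "'v \<Rightarrow> real"
    and pA :: "'v gstate \<Rightarrow> 'v gstate pmf" and pD :: "'v gstate \<Rightarrow> 'v option pmf"
  assumes "finite V" and "E \<subseteq> V \<times> V" and "lam \<subseteq> V" and "D \<subseteq> V"
    and "\<forall>v \<in> V. 0 < FN v \<and> FN v < 1" and "\<forall>v \<in> V. 0 < FP v \<and> FP v < 1"
    and "acyclic E"
    and "valid_strategies V E lam D pA pD"
  shows "acyclic (state_graph V E lam D FN FP) \<and>
         (\<forall>traj. is_play D FN FP pA pD traj \<longrightarrow>
            (\<exists>k. absorbing D (traj k)) \<and> term_time D traj \<le> card V + 4)"
proof (intro conjI allI impI)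
  show "acyclic (state_graph V E lam D FN FP)" using graph_acyclic[OF assms(7)] .
  fix traj assume play: "is_play D FN FP pA pD traj"
  let ?G = "state_graph V E lam D FN FP"
  have step: "traj (Suc k) \<in> state_space V \<and>
      (\<not> absorbing D (traj k) \<longrightarrow> (traj k, traj (Suc k)) \<in> ?G)"
    if sp: "traj k \<in> state_space V" for k
  proof (cases "absorbing D (traj k)")
    case True
    then show ?thesis using play sp unfolding is_play_def by auto
  next
    case False
    then obtain a d where a: "a \<in> set_pmf (pA (traj k))" and d: "d \<in> set_pmf (pD (traj k))"
      and p: "trans_prob FN FP (traj k) a d (traj (Suc k)) > 0"
      using play unfolding is_play_def by blast
    have a': "a \<in> act_A E lam D (traj k)" and d': "d \<in> act_D E D (traj k)"
      using assms(8) sp False a d unfolding valid_strategies_def by auto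
    have as: "a \<in> state_space V" using actA_space[OF assms(3,2) a'] .
    have ts: "traj (Suc k) \<in> state_space V"
      using tp_pos[OF p] as by (auto simp: state_space_def)
    have "(traj k, traj (Suc k)) \<in> ?G"
      unfolding state_graph_def using sp ts a' d' p by blast
    then show ?thesis using ts by blast
  qed
  have sp: "traj k \<in> state_space V" for k
  proof (induction k)
    case 0 then show ?case using play by (simp add: is_play_def state_space_def)
  next
    case (Suc k) then show ?case using step by blast
  qed
  have edge: "\<not> absorbing D (traj k) \<Longrightarrow> (traj k, traj (Suc k)) \<in> ?G" for k
    using step[OF sp] by blast
  define K where "K = card V + 1"
  have ex: "\<exists>k \<le> K. absorbing D (traj k)"
  proof (rule ccontr)
    assume "\<not> ?thesis"
    then have na: "\<And>j. j \<le> K \<Longrightarrow> \<not> absorbing D (traj j)" by blast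
    have nodes: "\<exists>v. traj j = Node v \<and> v \<in> V" if jj: "1 \<le> j" "j \<le> K" for j
    proof -
      obtain i where j: "j = Suc i" using jj(1) Suc_le_D[of 0 j] by auto
      have "(traj i, traj j) \<in> ?G" using edge na[of i] jj j by auto
      from edge_cases[OF this] have "traj j \<noteq> V0" by auto
      moreover have "\<not> absorbing D (traj j)" using na jj by auto
      ultimately show ?thesis using sp[of j] by (auto simp: state_space_def absorbing_def)
    qed
    define f where "f j = (THE v. traj j = Node v)" for j
    have fj: "traj j = Node (f j) \<and> f j \<in> V" if "1 \<le> j" "j \<le> K" for j
      using nodes[OF that] unfolding f_def by auto
    have fE: "(f j, f (Suc j)) \<in> E" if "1 \<le> j" "Suc j \<le> K" for j
    proof -
      have "(traj j, traj (Suc j)) \<in> ?G" using edge na that by auto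
      from edge_cases[OF this] show ?thesis using fj[of j] fj[of "Suc j"] that by auto
    qed
    have fT: "(f i, f (Suc i + m)) \<in> E\<^sup>+" if "1 \<le> i" "Suc i + m \<le> K" for i m
      using that
    proof (induction m)
      case 0 then show ?case using fE by auto
    next
      case (Suc m)
      then have "(f i, f (Suc i + m)) \<in> E\<^sup>+" by auto
      moreover have "(f (Suc i + m), f (Suc (Suc i + m))) \<in> E" using fE Suc.prems by auto
      ultimately show ?case by (auto intro: trancl_into_trancl)
    qed
    have inj: "inj_on f {1..K}"
    proof (rule inj_onI)
      fix x y assume x: "x \<in> {1..K}" and y: "y \<in> {1..K}" and eq: "f x = f y"
      show "x = y"
      proof (rule ccontr)
        assume "x \<noteq> y"
        then consider "x < y" | "y < x" by linarith
        then show False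
        proof cases
          case 1
          then obtain m where "y = Suc x + m" using less_iff_Suc_add by auto
          then have "(f x, f x) \<in> E\<^sup>+" using fT[of x m] x y eq by auto
          then show False using assms(7) by (auto simp: acyclic_def)
        next
          case 2
          then obtain m where "x = Suc y + m" using less_iff_Suc_add by auto
          then have "(f y, f y) \<in> E\<^sup>+" using fT[of y m] x y eq by auto
          then show False using assms(7) by (auto simp: acyclic_def)
        qed
      qed
    qed
    have "f ` {1..K} \<subseteq> V" using fj by auto
    then have "card {1..K} \<le> card V" using card_inj_on_le[OF inj _ assms(1)] by blast
    then show False by (simp add: K_def)
  qed
  then obtain k where k: "k \<le> K" "absorbing D (traj k)" by blast
  show "\<exists>k. absorbing D (traj k)" using k by blast
  have "term_time D traj \<le> k" unfolding term_time_def using k(2) by (rule Least_le)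
  then show "term_time D traj \<le> card V + 4" using k(1) K_def by simp
qed

end
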